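(* Let $A\in\mathbb{H}^{m\times n}$ have full column rank, let $p\ge2$ be an integer, $\alpha\in(0,2/\|A\|_2^2)$, $X_0=\alpha A^H$, and $X_{k+1}=\sum_{i=0}^{p-1}F_k^{\,i}X_k$ where $F_k=I_n-X_kA$. Then $\|F_k\|_2\le\|F_0\|_2^{\,p^k}\to0$, hence $X_kA\to I_n$; moreover $AX_k\to P=AA^\dagger$; and $(X_k)$ converges in operator norm to $A^\dagger$.
   Context: $\mathbb{H}$ denotes the real quaternions; $X^H=\overline{X}^\top$ is the quaternionic conjugate transpose; $\|\cdot\|_2$ is the operator norm induced by the Euclidean norm $\|x\|_2=\sqrt{\mathrm{Re}\,x^Hx}$. $A^\dagger$ is the Moore–Penrose pseudoinverse: the unique $A^\dagger\in\mathbb{H}^{n\times m}$ with $AA^\dagger A=A$, $A^\dagger AA^\dagger=A^\dagger$, $(AA^\dagger)^H=AA^\dagger$, $(A^\dagger A)^H=A^\dagger A$. All products are quaternionic matrix products in the written order. *)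

theory Defs
  imports "HOL-Analysis.Analysis"
begin

section \<open>Real quaternions\<close>

datatype quat = Quat (qre: real) (qi: real) (qj: real) (qk: real)

lemma quat_eqI: "qre a = qre b \<Longrightarrow> qi a = qi b \<Longrightarrow> qj a = qj b \<Longrightarrow> qk a = qk b \<Longrightarrow> a = b"
  by (cases a; cases b) auto

instantiation quat :: ring_1
begin
definition "0 = Quat 0 0 0 0"
definition "1 = Quat 1 0 0 0"
definition "a + b = Quat (qre a + qre b) (qi a + qi b) (qj a + qj b) (qk a + qk b)"
definition "a - b = Quat (qre a - qre b) (qi a - qi b) (qj a - qj b) (qk a - qk b)"
definition "- a = Quat (- qre a) (- qi a) (- qj a) (- qk a)"
definition "a * b = Quat
   (qre a * qre b - qi a * qi b - qj a * qj b - qk a * qk b)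
   (qre a * qi b + qi a * qre b + qj a * qk b - qk a * qj b)
   (qre a * qj b - qi a * qk b + qj a * qre b + qk a * qi b)
   (qre a * qk b + qi a * qj b - qj a * qi b + qk a * qre b)"
instance
  by standard (auto intro!: quat_eqI simp: zero_quat_def one_quat_def plus_quat_def
      minus_quat_def uminus_quat_def times_quat_def algebra_simps)
end

text \<open>Quaternionic conjugate and the embedding of the reals.\<close>
definition qcnj :: "quat \<Rightarrow> quat" where
  "qcnj a = Quat (qre a) (- qi a) (- qj a) (- qk a)"

definition qof_real :: "real \<Rightarrow> quat" where
  "qof_real r = Quat r 0 0 0"

text \<open>Squared modulus of a quaternion (= real part of conj(a) * a).\<close>
definition qnorm2 :: "quat \<Rightarrow> real" where
  "qnorm2 a = (qre a)^2 + (qi a)^2 + (qj a)^2 + (qk a)^2"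

section \<open>Quaternion matrices (m x n matrix = quat^'n^'m)\<close>

text \<open>Conjugate transpose X^H.\<close>
definition qadj :: "quat^'n^'m \<Rightarrow> quat^'m^'n" where
  "qadj A = (\<chi> i j. qcnj (A $ j $ i))"

text \<open>Euclidean norm of a quaternion vector: sqrt (Re x^H x).\<close>
definition qvnorm :: "quat^'n \<Rightarrow> real" where
  "qvnorm x = sqrt (\<Sum>i\<in>UNIV. qnorm2 (x $ i))"

text \<open>Induced operator 2-norm.\<close>
definition qopnorm :: "quat^'n^'m \<Rightarrow> real" where
  "qopnorm A = Sup {qvnorm (A *v x) | x. qvnorm x \<le> 1}"

text \<open>Scalar multiple of a matrix by a real number.\<close>
definition qscale :: "real \<Rightarrow> quat^'n^'m \<Rightarrow> quat^'n^'m" where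
  "qscale r A = (\<chi> i j. qof_real r * A $ i $ j)"

text \<open>Matrix powers.\<close>
definition qmpow :: "quat^'n^'n \<Rightarrow> nat \<Rightarrow> quat^'n^'n" where
  "qmpow M k = ((\<lambda>Y. M ** Y) ^^ k) (mat 1)"

text \<open>Full column rank: the columns are (right-)linearly independent.\<close>
definition full_col_rank :: "quat^'n^'m \<Rightarrow> bool" where
  "full_col_rank A \<longleftrightarrow> (\<forall>x. A *v x = 0 \<longrightarrow> x = 0)"

text \<open>Moore--Penrose conditions and the pseudoinverse.\<close>
definition is_pinv :: "quat^'n^'m \<Rightarrow> quat^'m^'n \<Rightarrow> bool" where
  "is_pinv A G \<longleftrightarrow> A ** G ** A = A \<and> G ** A ** G = G \<and>
     qadj (A ** G) = A ** G \<and> qadj (G ** A) = G ** A"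

definition qpinv :: "quat^'n^'m \<Rightarrow> quat^'m^'n" where
  "qpinv A = (THE G. is_pinv A G)"

end

theory Submission
  imports Defs
begin

lemma quat_sel_simps [simp]:
  "qre 0 = 0" "qi 0 = 0" "qj 0 = 0" "qk 0 = 0"
  "qre 1 = 1" "qi 1 = 0" "qj 1 = 0" "qk 1 = 0"
  "qre (a + b) = qre a + qre b" "qi (a + b) = qi a + qi b" "qj (a + b) = qj a + qj b" "qk (a + b) = qk a + qk b"
  "qre (a - b) = qre a - qre b" "qi (a - b) = qi a - qi b" "qj (a - b) = qj a - qj b" "qk (a - b) = qk a - qk b"
  "qre (- a) = - qre a" "qi (- a) = - qi a" "qj (- a) = - qj a" "qk (- a) = - qk a"
  "qre (a * b) = qre a * qre b - qi a * qi b - qj a * qj b - qk a * qk b"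
  "qi (a * b) = qre a * qi b + qi a * qre b + qj a * qk b - qk a * qj b"
  "qj (a * b) = qre a * qj b - qi a * qk b + qj a * qre b + qk a * qi b"
  "qk (a * b) = qre a * qk b + qi a * qj b - qj a * qi b + qk a * qre b"
  by (simp_all add: zero_quat_def one_quat_def plus_quat_def minus_quat_def uminus_quat_def times_quat_def)

instantiation quat :: real_vector
begin
definition "scaleR r a = Quat (r * qre a) (r * qi a) (r * qj a) (r * qk a)"
instance by standard (auto intro!: quat_eqI simp: scaleR_quat_def algebra_simps)
end

lemma quat_scaleR_sel [simp]:
  "qre (r *\<^sub>R a) = r * qre a" "qi (r *\<^sub>R a) = r * qi a" "qj (r *\<^sub>R a) = r * qj a" "qk (r *\<^sub>R a) = r * qk a"
  by (simp_all add: scaleR_quat_def)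

instance quat :: real_algebra_1
  by standard (auto intro!: quat_eqI simp: algebra_simps)

instantiation quat :: real_inner
begin
definition "inner a b = qre a * qre b + qi a * qi b + qj a * qj b + qk a * qk b"
definition "norm (a::quat) = sqrt (inner a a)"
definition "sgn (a::quat) = a /\<^sub>R norm a"
definition "dist (a::quat) b = norm (a - b)"
definition "uniformity = (INF e\<in>{0 <..}. principal {(x, y::quat). dist x y < e})"
definition "open (U :: quat set) \<longleftrightarrow> (\<forall>x\<in>U. eventually (\<lambda>(x', y). x' = x \<longrightarrow> y \<in> U) uniformity)"
instance proof
  fix a b c :: quat and r :: real
  show "inner a b = inner b a" by (simp add: inner_quat_def algebra_simps)
  show "inner (a + b) c = inner a c + inner b c" by (simp add: inner_quat_def algebra_simps)
  show "inner (r *\<^sub>R a) b = r * inner a b" by (simp add: inner_quat_def algebra_simps)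
  show "0 \<le> inner a a" by (simp add: inner_quat_def)
  show "inner a a = 0 \<longleftrightarrow> a = 0"
  proof
    assume h: "inner a a = 0"
    have h': "qre a * qre a + qi a * qi a + qj a * qj a + qk a * qk a = 0"
      using h by (simp add: inner_quat_def)
    have "qre a * qre a = 0" "qi a * qi a = 0" "qj a * qj a = 0" "qk a * qk a = 0"
      using h' zero_le_square[of "qre a"] zero_le_square[of "qi a"] zero_le_square[of "qj a"]
        zero_le_square[of "qk a"] by linarith+
    then show "a = 0" by (auto intro: quat_eqI)
  qed (simp add: inner_quat_def)
  show "norm a = sqrt (inner a a)" by (simp add: norm_quat_def)
qed (rule sgn_quat_def dist_quat_def uniformity_quat_def open_quat_def)+
end

definition qbasis :: "quat set" where
  "qbasis = {Quat 1 0 0 0, Quat 0 1 0 0, Quat 0 0 1 0, Quat 0 0 0 1}"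

instantiation quat :: euclidean_space
begin
definition "Basis = qbasis"
instance proof
  show "(Basis :: quat set) \<noteq> {}" by (simp add: Basis_quat_def qbasis_def)
  show "finite (Basis :: quat set)" by (simp add: Basis_quat_def qbasis_def)
  fix u v x :: quat
  show "inner u v = (if u = v then 1 else 0)" if "u \<in> Basis" "v \<in> Basis"
    using that unfolding Basis_quat_def qbasis_def
    by (elim insertE emptyE; simp add: inner_quat_def)
  show "(\<forall>u\<in>Basis. inner x u = 0) \<longleftrightarrow> x = 0"
  proof
    assume "\<forall>u\<in>Basis. inner x u = 0"
    then have "qre x = 0" "qi x = 0" "qj x = 0" "qk x = 0"
      by (simp_all add: Basis_quat_def qbasis_def inner_quat_def)
    then show "x = 0" by (intro quat_eqI) simp_all
  qed simp
qed
end

lemma norm_quat_sq: "(norm (a::quat))^2 = qnorm2 a"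
  by (simp add: norm_quat_def inner_quat_def qnorm2_def power2_eq_square)

lemma norm_quat_mult: "norm ((a::quat) * b) = norm a * norm b"
proof -
  have "(norm (a*b))^2 = (norm a * norm b)^2"
    by (simp add: power_mult_distrib norm_quat_sq qnorm2_def) algebra
  then show ?thesis by (simp add: power2_eq_iff_nonneg)
qed

lemma qvnorm_eq: "qvnorm x = norm x"
  by (simp add: qvnorm_def norm_vec_def L2_set_def norm_quat_sq)

lemma qcnj_sel [simp]: "qre (qcnj a) = qre a" "qi (qcnj a) = - qi a" "qj (qcnj a) = - qj a" "qk (qcnj a) = - qk a"
  by (simp_all add: qcnj_def)

lemma qcnj_mult: "qcnj (a * b) = qcnj b * qcnj a"
  by (rule quat_eqI) (simp_all add: algebra_simps)
lemma qcnj_add: "qcnj (a + b) = qcnj a + qcnj b"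
  by (rule quat_eqI) (simp_all add: algebra_simps)
lemma qcnj_diff: "qcnj (a - b) = qcnj a - qcnj b"
  by (rule quat_eqI) (simp_all add: algebra_simps)
lemma qcnj_qcnj [simp]: "qcnj (qcnj a) = a"
  by (rule quat_eqI) simp_all
lemma qcnj_0 [simp]: "qcnj 0 = 0" and qcnj_1 [simp]: "qcnj 1 = 1"
  by (rule quat_eqI; simp)+
lemma qcnj_sum: "qcnj (sum f S) = sum (\<lambda>x. qcnj (f x)) S"
  by (induction S rule: infinite_finite_induct) (simp_all add: qcnj_add)

lemma inner_qcnj: "inner a (qcnj c * b) = inner (c * a) (b::quat)"
  by (simp add: inner_quat_def algebra_simps)

lemma qcnj_scaleR: "qcnj (r *\<^sub>R a) = r *\<^sub>R qcnj a"
  by (rule quat_eqI) simp_all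

lemma qof_real_scaleR: "qof_real r * a = r *\<^sub>R a"
  by (rule quat_eqI) (simp_all add: qof_real_def)

lemma mv_scaleR: "(M::quat^'n^'m) *v (r *\<^sub>R x) = r *\<^sub>R (M *v x)"
  by (simp add: vec_eq_iff matrix_vector_mult_def scaleR_sum_right)

lemma scaleR_mv: "(r *\<^sub>R (M::quat^'n^'m)) *v x = r *\<^sub>R (M *v x)"
  by (simp add: vec_eq_iff matrix_vector_mult_def scaleR_sum_right)

lemma uminus_mv: "(- (M::quat^'n^'m)) *v x = - (M *v x)"
  by (simp add: vec_eq_iff matrix_vector_mult_def sum_negf)

lemma mm_add_r: "((A::'a::semiring_1^'n^'m) + B) ** C = A ** C + B ** C"
  by (vector matrix_matrix_mult_def sum.distrib distrib_right)

lemma mm_diff_l: "(A::'a::ring_1^'n^'m) ** (B - C) = A ** B - A ** C"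
  by (vector matrix_matrix_mult_def sum_subtractf right_diff_distrib)

lemma mm_diff_r: "((A::'a::ring_1^'n^'m) - B) ** C = A ** C - B ** C"
  by (vector matrix_matrix_mult_def sum_subtractf left_diff_distrib)

lemma mv_bound: "\<exists>K. \<forall>x. norm ((M::quat^'n^'m) *v x) \<le> K * norm x"
proof (intro exI allI)
  fix x :: "quat^'n"
  have "norm (M *v x) \<le> (\<Sum>i\<in>UNIV. norm ((M *v x) $ i))"
    unfolding norm_vec_def by (rule L2_set_le_sum) simp
  also have "\<dots> \<le> (\<Sum>i\<in>UNIV. \<Sum>j\<in>UNIV. norm (M$i$j) * norm x)"
  proof (rule sum_mono)
    fix i
    have "norm ((M *v x) $ i) = norm (\<Sum>j\<in>UNIV. M$i$j * x$j)"
      by (simp add: matrix_vector_mult_def)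
    also have "\<dots> \<le> (\<Sum>j\<in>UNIV. norm (M$i$j * x$j))" by (rule norm_sum)
    also have "\<dots> \<le> (\<Sum>j\<in>UNIV. norm (M$i$j) * norm x)"
      by (rule sum_mono) (auto simp: norm_quat_mult intro!: mult_left_mono Finite_Cartesian_Product.norm_nth_le)
    finally show "norm ((M *v x) $ i) \<le> (\<Sum>j\<in>UNIV. norm (M$i$j) * norm x)" .
  qed
  also have "\<dots> = (\<Sum>i\<in>UNIV. \<Sum>j\<in>UNIV. norm (M$i$j)) * norm x"
    by (simp add: sum_distrib_right)
  finally show "norm (M *v x) \<le> (\<Sum>i\<in>UNIV. \<Sum>j\<in>UNIV. norm (M$i$j)) * norm x" .
qed

lemma qopnorm_alt: "qopnorm M = Sup {norm ((M::quat^'n^'m) *v x) | x. norm x \<le> 1}"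
  by (simp add: qopnorm_def qvnorm_eq)

lemma opnorm_bdd: "bdd_above {norm ((M::quat^'n^'m) *v x) | x. norm x \<le> 1}"
proof -
  obtain K where K: "\<forall>x. norm (M *v x) \<le> K * norm x" using mv_bound by blast
  show ?thesis
  proof (rule bdd_aboveI)
    fix y assume "y \<in> {norm (M *v x) | x. norm x \<le> 1}"
    then obtain x where y: "y = norm (M *v x)" and x: "norm x \<le> 1" by blast
    have "K * norm x \<le> max K 0"
    proof (cases "K \<ge> 0")
      case True then show ?thesis using x by (simp add: mult_left_le)
    next
      case False then show ?thesis by (simp add: mult_nonpos_nonneg)
    qed
    then show "y \<le> max K 0" using K y by (meson order_trans)
  qed
qed

lemma opnorm_upper: "norm (x::quat^'n) \<le> 1 \<Longrightarrow> norm ((M::quat^'n^'m) *v x) \<le> qopnorm M"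
  unfolding qopnorm_alt by (rule cSup_upper[OF _ opnorm_bdd]) blast

lemma opnorm_nonneg: "0 \<le> qopnorm (M::quat^'n^'m)"
  using opnorm_upper[of 0 M] by simp

lemma opnorm_bound: "norm ((M::quat^'n^'m) *v x) \<le> qopnorm M * norm x"
proof (cases "x = 0")
  case True then show ?thesis by simp
next
  case False
  then have nx: "norm x > 0" by simp
  have "norm (M *v ((1 / norm x) *\<^sub>R x)) \<le> qopnorm M"
    by (rule opnorm_upper) (simp add: nx)
  then have "(1 / norm x) * norm (M *v x) \<le> qopnorm M"
    by (simp add: mv_scaleR nx)
  then show ?thesis using nx by (simp add: field_simps)
qed

lemma opnorm_le:
  assumes "\<And>x. norm (x::quat^'n) \<le> 1 \<Longrightarrow> norm ((M::quat^'n^'m) *v x) \<le> K"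
  shows "qopnorm M \<le> K"
  unfolding qopnorm_alt
proof (rule cSup_least)
  have "norm (M *v 0) \<in> {norm (M *v x) | x. norm x \<le> 1}"
    by (rule CollectI, rule exI[of _ 0]) simp
  then show "{norm (M *v x) | x. norm x \<le> 1} \<noteq> {}" by blast
  fix y assume "y \<in> {norm (M *v x) | x. norm x \<le> 1}"
  then obtain x where "y = norm (M *v x)" "norm x \<le> 1" by blast
  then show "y \<le> K" using assms by simp
qed

lemma opnorm_le':
  assumes K: "0 \<le> K" and h: "\<And>x. norm ((M::quat^'n^'m) *v x) \<le> K * norm x"
  shows "qopnorm M \<le> K"
proof (rule opnorm_le)
  fix x :: "quat^'n" assume "norm x \<le> 1"
  then have "K * norm x \<le> K" by (rule mult_left_le[OF _ K])
  then show "norm (M *v x) \<le> K" using h[of x] by linarith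
qed

lemma opnorm_mult: "qopnorm ((M::quat^'n^'m) ** (N::quat^'p^'n)) \<le> qopnorm M * qopnorm N"
proof (rule opnorm_le')
  show "0 \<le> qopnorm M * qopnorm N" by (simp add: opnorm_nonneg)
  fix x
  have "norm ((M ** N) *v x) = norm (M *v (N *v x))" by (simp add: matrix_vector_mul_assoc)
  also have "\<dots> \<le> qopnorm M * norm (N *v x)" by (rule opnorm_bound)
  also have "\<dots> \<le> qopnorm M * (qopnorm N * norm x)"
    by (rule mult_left_mono[OF opnorm_bound opnorm_nonneg])
  finally show "norm ((M ** N) *v x) \<le> qopnorm M * qopnorm N * norm x" by (simp add: mult.assoc)
qed

lemma opnorm_uminus: "qopnorm (- (M::quat^'n^'m)) \<le> qopnorm M"
  by (rule opnorm_le'[OF opnorm_nonneg]) (simp add: uminus_mv opnorm_bound)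

lemma opnorm_swap: "qopnorm ((M::quat^'n^'m) - N) \<le> qopnorm (N - M)"
  using opnorm_uminus[of "N - M"] by simp

lemma opnorm_mat1: "qopnorm (mat 1 :: quat^'n^'n) \<le> 1"
  by (rule opnorm_le) simp

lemma qmpow_0 [simp]: "qmpow M 0 = mat 1"
  by (simp add: qmpow_def)

lemma qmpow_Suc: "qmpow M (Suc i) = M ** qmpow M i"
  by (simp add: qmpow_def)

lemma qmpow_Suc2: "qmpow (M::quat^'n^'n) (Suc i) = qmpow M i ** M"
proof (induction i)
  case 0 show ?case unfolding qmpow_Suc qmpow_0 by simp
next
  case (Suc i)
  have "qmpow M (Suc (Suc i)) = M ** qmpow M (Suc i)" by (rule qmpow_Suc)
  also have "\<dots> = M ** (qmpow M i ** M)" by (simp only: Suc)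
  also have "\<dots> = (M ** qmpow M i) ** M" by (rule matrix_mul_assoc)
  also have "\<dots> = qmpow M (Suc i) ** M" by (simp only: qmpow_Suc)
  finally show ?case .
qed

lemma opnorm_qmpow: "qopnorm (qmpow (M::quat^'n^'n) i) \<le> qopnorm M ^ i"
proof (induction i)
  case 0 then show ?case using opnorm_mat1 by simp
next
  case (Suc i)
  have "qopnorm (qmpow M (Suc i)) \<le> qopnorm M * qopnorm (qmpow M i)"
    unfolding qmpow_Suc by (rule opnorm_mult)
  also have "\<dots> \<le> qopnorm M * qopnorm M ^ i"
    by (rule mult_left_mono[OF Suc opnorm_nonneg])
  finally show ?case by simp
qed

lemma grp_cancel: "(x::'a::ab_group_add) - y + (y - z) = x - z"
  by simp

lemma geom_mat: "(\<Sum>i<p. qmpow (F::quat^'n^'n) i) ** (mat 1 - F) = mat 1 - qmpow F p"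
proof (induction p)
  case 0 then show ?case by (simp add: zero_vec_def[symmetric])
next
  case (Suc p)
  have "(\<Sum>i<Suc p. qmpow F i) ** (mat 1 - F)
      = (\<Sum>i<p. qmpow F i) ** (mat 1 - F) + qmpow F p ** (mat 1 - F)"
    by (simp add: mm_add_r)
  also have "\<dots> = (mat 1 - qmpow F p) + (qmpow F p - qmpow F p ** F)"
    by (simp only: Suc mm_diff_l[of "qmpow F p"] matrix_mul_rid)
  also have "\<dots> = mat 1 - qmpow F (Suc p)"
    by (simp only: qmpow_Suc2 grp_cancel)
  finally show ?case .
qed

lemma qadj_nth [simp]: "qadj M $ i $ j = qcnj (M $ j $ i)"
  by (simp add: qadj_def)

lemma qadj_mult: "qadj ((M::quat^'n^'m) ** (N::quat^'p^'n)) = qadj N ** qadj M"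
  by (simp add: vec_eq_iff matrix_matrix_mult_def qcnj_sum qcnj_mult)

lemma qadj_qadj [simp]: "qadj (qadj M) = M"
  by (simp add: vec_eq_iff)

lemma qadj_mat1 [simp]: "qadj (mat 1) = mat 1"
  by (simp add: vec_eq_iff mat_def)

lemma qadj_scaleR: "qadj (r *\<^sub>R M) = r *\<^sub>R qadj M"
  by (simp add: vec_eq_iff qcnj_scaleR)

lemma adj_inner: "inner x (qadj (M::quat^'n^'m) *v y) = inner (M *v x) y"
proof -
  have "inner x (qadj M *v y) = (\<Sum>j\<in>UNIV. \<Sum>i\<in>UNIV. inner (x$j) (qcnj (M$i$j) * y$i))"
    by (simp add: inner_vec_def matrix_vector_mult_def inner_sum_right)
  also have "\<dots> = (\<Sum>j\<in>UNIV. \<Sum>i\<in>UNIV. inner (M$i$j * x$j) (y$i))"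
    by (simp add: inner_qcnj)
  also have "\<dots> = (\<Sum>i\<in>UNIV. \<Sum>j\<in>UNIV. inner (M$i$j * x$j) (y$i))"
    by (rule sum.swap)
  also have "\<dots> = inner (M *v x) y"
    by (simp add: inner_vec_def matrix_vector_mult_def inner_sum_left)
  finally show ?thesis .
qed

lemma adj_bound: "norm (qadj (M::quat^'n^'m) *v y) \<le> qopnorm M * norm y"
proof -
  define z where "z = qadj M *v y"
  have "norm z ^ 2 = inner z (qadj M *v y)" by (simp add: z_def power2_norm_eq_inner)
  also have "\<dots> = inner (M *v z) y" by (rule adj_inner)
  also have "\<dots> \<le> norm (M *v z) * norm y" by (rule Cauchy_Schwarz_ineq2[THEN abs_le_D1])
  also have "\<dots> \<le> qopnorm M * norm z * norm y"
    by (rule mult_right_mono[OF opnorm_bound norm_ge_zero])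
  finally have h: "norm z * norm z \<le> (qopnorm M * norm y) * norm z"
    by (simp add: power2_eq_square algebra_simps)
  show ?thesis
  proof (cases "norm z = 0")
    case True then show ?thesis by (simp add: z_def mult_nonneg_nonneg opnorm_nonneg)
  next
    case False then have "norm z > 0" by simp
    then show ?thesis using h unfolding z_def by (simp add: z_def)
  qed
qed

lemma mv_axis: "((M::'a::semiring_1^'n^'m) *v axis j 1) $ i = M $ i $ j"
  by (simp add: matrix_vector_mult_def axis_def if_distrib cong: if_cong)

lemma mat_eq_cols: "(\<And>j. (M::'a::semiring_1^'n^'m) *v axis j 1 = N *v axis j 1) \<Longrightarrow> M = N"
  by (metis mv_axis vec_eq_iff)

lemma pinv_unique:
  fixes A :: "quat^'n^'m"
  assumes G: "is_pinv A G" and H: "is_pinv A H"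
  shows "G = H"
proof -
  from G have G1: "A ** G ** A = A" and G2: "G ** A ** G = G"
    and G3: "qadj (A ** G) = A ** G" and G4: "qadj (G ** A) = G ** A"
    by (auto simp: is_pinv_def)
  from H have H1: "A ** H ** A = A" and H2: "H ** A ** H = H"
    and H3: "qadj (A ** H) = A ** H" and H4: "qadj (H ** A) = H ** A"
    by (auto simp: is_pinv_def)
  have "qadj A = qadj ((A ** H) ** A)" using H1 by simp
  also have "\<dots> = qadj A ** qadj (A ** H)" by (rule qadj_mult)
  also have "\<dots> = qadj A ** (A ** H)" using H3 by simp
  finally have a1: "qadj A = qadj A ** (A ** H)" .
  have "qadj A = qadj (A ** (G ** A))" using G1 by (simp add: matrix_mul_assoc)
  also have "\<dots> = qadj (G ** A) ** qadj A" by (rule qadj_mult)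
  also have "\<dots> = G ** A ** qadj A" using G4 by simp
  finally have a2: "qadj A = G ** A ** qadj A" .
  have "G = G ** (A ** G)" using G2 by (simp add: matrix_mul_assoc)
  also have "\<dots> = G ** (qadj G ** qadj A)" using G3 by (metis qadj_mult)
  also have "\<dots> = G ** (qadj G ** (qadj A ** (A ** H)))" using a1 by simp
  also have "\<dots> = G ** (qadj (A ** G)) ** A ** H" by (simp add: qadj_mult matrix_mul_assoc)
  also have "\<dots> = G ** A ** H" using G2 G3 by (simp add: matrix_mul_assoc)
  finally have e1: "G = G ** A ** H" .
  have "H = (H ** A) ** H" using H2 by simp
  also have "\<dots> = qadj A ** qadj H ** H" using H4 by (metis qadj_mult)
  also have "\<dots> = (G ** A ** qadj A) ** qadj H ** H" using a2 by simp
  also have "\<dots> = G ** A ** (qadj (H ** A)) ** H" by (simp add: qadj_mult matrix_mul_assoc)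
  also have "\<dots> = (G ** A) ** (H ** A ** H)" using H4 by (simp add: matrix_mul_assoc)
  also have "\<dots> = G ** A ** H" using H2 by simp
  finally show ?thesis using e1 by simp
qed

lemma pinv_exists:
  fixes A :: "quat^'n^'m"
  assumes rank: "full_col_rank A"
  shows "\<exists>C. qadj C = C \<and> C ** (qadj A ** A) = mat 1 \<and> (qadj A ** A) ** C = mat 1 \<and>
     is_pinv A (C ** qadj A) \<and> qpinv A = C ** qadj A"
proof -
  define B where "B = qadj A ** A"
  have injB: "B *v x = 0 \<Longrightarrow> x = 0" for x
  proof -
    assume "B *v x = 0"
    then have "inner x (qadj A *v (A *v x)) = 0"
      by (simp add: B_def matrix_vector_mul_assoc)
    then have "inner (A *v x) (A *v x) = 0" by (simp add: adj_inner)
    then have "A *v x = 0" by simp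
    then show "x = 0" using rank by (simp add: full_col_rank_def)
  qed
  have injB2: "B *v x = B *v y \<Longrightarrow> x = y" for x y
  proof -
    assume "B *v x = B *v y"
    then have "B *v (x - y) = 0" by (simp add: matrix_vector_mult_diff_distrib)
    then have "x - y = 0" by (rule injB)
    then show "x = y" by simp
  qed
  have linB: "linear (\<lambda>x. B *v x)"
    by (rule linearI) (simp_all add: matrix_vector_right_distrib mv_scaleR)
  have "inj (\<lambda>x. B *v x)"
    by (rule injI) (rule injB2)
  then have surjB: "surj (\<lambda>x. B *v x)"
    using linB linear_injective_imp_surjective by blast
  have cancel: "B ** M = B ** N \<Longrightarrow> M = N" for M N :: "quat^'n^'n"
  proof (rule mat_eq_cols)
    fix j assume "B ** M = B ** N"
    then have "B *v (M *v axis j 1) = B *v (N *v axis j 1)"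
      by (simp add: matrix_vector_mul_assoc)
    then show "M *v axis j 1 = N *v axis j 1"
      by (rule injB2)
  qed
  define v where "v j = (SOME v. B *v v = axis j (1::quat))" for j
  have v: "B *v v j = axis j 1" for j
  proof -
    obtain w where "axis j (1::quat) = B *v w" using surjD[OF surjB] by blast
    then show ?thesis unfolding v_def by (metis (mono_tags, lifting) someI_ex)
  qed
  define C where "C = (\<chi> i j. v j $ i)"
  have BC: "B ** C = mat 1"
  proof (rule mat_eq_cols)
    fix j
    have "C *v axis j 1 = v j" by (simp add: vec_eq_iff mv_axis C_def)
    then show "(B ** C) *v axis j 1 = mat 1 *v axis j 1"
      by (simp add: matrix_vector_mul_assoc[symmetric] v)
  qed
  have CB: "C ** B = mat 1"
    by (rule cancel) (simp add: matrix_mul_assoc BC)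
  have BH: "qadj B = B" by (simp add: B_def qadj_mult)
  have "qadj C ** B = mat 1"
    using arg_cong[OF BC, of qadj] by (simp add: qadj_mult BH)
  then have CH: "qadj C = C"
  proof -
    assume h: "qadj C ** B = mat 1"
    have "qadj C = qadj C ** (B ** C)" by (simp add: BC)
    also have "\<dots> = (qadj C ** B) ** C" by (rule matrix_mul_assoc)
    also have "\<dots> = C" by (simp add: h)
    finally show ?thesis .
  qed
  define G where "G = C ** qadj A"
  have GA: "G ** A = mat 1" using CB by (simp add: G_def B_def matrix_mul_assoc)
  have pG: "is_pinv A G"
    unfolding is_pinv_def
  proof (intro conjI)
    show "A ** G ** A = A" by (simp add: GA matrix_mul_assoc[symmetric])
    show "G ** A ** G = G" by (simp add: GA)
    show "qadj (A ** G) = A ** G" by (simp add: G_def qadj_mult CH matrix_mul_assoc)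
    show "qadj (G ** A) = G ** A" by (simp add: GA)
  qed
  have "qpinv A = G"
    unfolding qpinv_def
  proof (rule the_equality)
    show "is_pinv A G" by (rule pG)
    fix H assume "is_pinv A H" then show "H = G" by (rule pinv_unique[OF _ pG])
  qed
  then show ?thesis using CH CB BC pG by (auto simp: B_def G_def)
qed

theorem mainTheorem6:
  fixes A :: "quat^'n::finite^'m::finite"
    and X :: "nat \<Rightarrow> quat^'m^'n"
    and p :: nat and \<alpha> :: real
  assumes rank: "full_col_rank A"
    and p: "p \<ge> 2"
    and alpha_pos: "0 < \<alpha>" and alpha_lt: "\<alpha> < 2 / (qopnorm A)^2"
    and X0: "X 0 = qscale \<alpha> (qadj A)"
    and XSuc: "\<forall>k. X (Suc k) = (\<Sum>i<p. qmpow (mat 1 - X k ** A) i) ** X k"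
  shows "(\<forall>k. qopnorm (mat 1 - X k ** A) \<le> qopnorm (mat 1 - X 0 ** A) ^ (p ^ k))
    \<and> ((\<lambda>k. qopnorm (mat 1 - X 0 ** A) ^ (p ^ k)) \<longlonglongrightarrow> 0)
    \<and> ((\<lambda>k. qopnorm (X k ** A - mat 1)) \<longlonglongrightarrow> 0)
    \<and> ((\<lambda>k. qopnorm (A ** X k - A ** qpinv A)) \<longlonglongrightarrow> 0)
    \<and> ((\<lambda>k. qopnorm (X k - qpinv A)) \<longlonglongrightarrow> 0)"
proof -
  obtain C where CH: "qadj C = C" and CB: "C ** (qadj A ** A) = mat 1"
    and BC: "(qadj A ** A) ** C = mat 1" and PG: "qpinv A = C ** qadj A"
    using pinv_exists[OF rank] by blast
  define G where "G = C ** qadj A"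
  define F where "F k = mat 1 - X k ** A" for k
  define q where "q = qopnorm (F 0)"
  define a where "a = qopnorm A"
  define g where "g = qopnorm G"
  have GA: "G ** A = mat 1" using CB by (simp add: G_def matrix_mul_assoc)
  have a_nonneg: "a \<ge> 0" by (simp add: a_def opnorm_nonneg)
  have a_pos: "a > 0"
  proof -
    have "a \<noteq> 0" using alpha_pos alpha_lt by (auto simp: a_def)
    then show ?thesis using a_nonneg by simp
  qed
  have aa: "\<alpha> * a^2 < 2" using alpha_lt a_pos by (simp add: a_def field_simps)
  have x_le: "norm x \<le> g * norm (A *v x)" for x
  proof -
    have "x = G *v (A *v x)" by (simp add: matrix_vector_mul_assoc GA)
    then have "norm x = norm (G *v (A *v x))" by simp
    also have "\<dots> \<le> g * norm (A *v x)" unfolding g_def by (rule opnorm_bound)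
    finally show ?thesis .
  qed
  have g_pos: "g > 0"
  proof -
    obtain i :: 'n where True by blast
    define x where "x = axis i (1::quat)"
    have "(1::quat) \<noteq> 0" by (simp add: one_quat_def zero_quat_def)
    then have "x \<noteq> 0" by (simp add: x_def axis_eq_0_iff)
    then have "norm x > 0" by simp
    moreover have "g \<ge> 0" by (simp add: g_def opnorm_nonneg)
    ultimately show ?thesis using x_le[of x] by (cases "g = 0") auto
  qed
  have X0': "X 0 = \<alpha> *\<^sub>R qadj A"
    using X0 by (simp add: qscale_def vec_eq_iff qof_real_scaleR)
  define c where "c = \<alpha> * (2 - \<alpha> * a^2)"
  have c_pos: "c > 0" using aa alpha_pos by (simp add: c_def)
  define s where "s = 1 - c / g^2"
  have s_lt: "s < 1" using c_pos g_pos by (simp add: s_def)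
  have F0v: "F 0 *v x = x - \<alpha> *\<^sub>R (qadj A *v (A *v x))" for x
    by (simp add: F_def X0' matrix_vector_mult_diff_rdistrib scaleR_mv
        matrix_vector_mul_assoc[symmetric] scalar_matrix_assoc[symmetric])
  have F0sq: "(norm (F 0 *v x))^2 \<le> s * (norm x)^2" for x
  proof -
    define y where "y = A *v x"
    define z where "z = qadj A *v y"
    define t where "t = norm y"
    have xz: "inner x z = t^2" by (simp add: z_def adj_inner t_def y_def power2_norm_eq_inner)
    have zb: "norm z \<le> a * t" unfolding z_def a_def t_def by (rule adj_bound)
    have zb2: "(norm z)^2 \<le> a^2 * t^2"
      using power_mono[OF zb norm_ge_zero] by (simp add: power_mult_distrib)
    have "(norm (F 0 *v x))^2 = (norm (x - \<alpha> *\<^sub>R z))^2" by (simp add: F0v z_def y_def)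
    also have "\<dots> = inner (x - \<alpha> *\<^sub>R z) (x - \<alpha> *\<^sub>R z)" by (rule power2_norm_eq_inner)
    also have "\<dots> = inner x x - 2 * \<alpha> * inner x z + \<alpha>^2 * inner z z"
      by (simp add: inner_diff_left inner_diff_right inner_commute[of z x] power2_eq_square algebra_simps)
    also have "\<dots> = (norm x)^2 - 2 * \<alpha> * inner x z + \<alpha>^2 * (norm z)^2"
      by (simp add: power2_norm_eq_inner)
    also have "\<dots> \<le> (norm x)^2 - 2 * \<alpha> * t^2 + \<alpha>^2 * (a^2 * t^2)"
      using zb2 by (simp add: xz mult_left_mono)
    also have "\<dots> = (norm x)^2 - c * t^2" by (simp add: c_def power2_eq_square algebra_simps)
    also have "\<dots> \<le> (norm x)^2 - c * ((norm x)^2 / g^2)"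
    proof -
      have "norm x \<le> g * t" using x_le by (simp add: t_def y_def)
      then have "(norm x)^2 \<le> (g * t)^2" by (rule power_mono) simp
      then have "(norm x)^2 / g^2 \<le> t^2" using g_pos by (simp add: field_simps power_mult_distrib)
      then have "c * ((norm x)^2 / g^2) \<le> c * t^2" using c_pos by (intro mult_left_mono) auto
      then show ?thesis by linarith
    qed
    also have "\<dots> = s * (norm x)^2" by (simp add: s_def algebra_simps)
    finally show ?thesis .
  qed
  have q_nonneg: "q \<ge> 0" by (simp add: q_def opnorm_nonneg)
  have q_le: "q \<le> sqrt (max 0 s)"
    unfolding q_def
  proof (rule opnorm_le)
    fix x :: "quat^'n" assume x: "norm x \<le> 1"
    have "(norm x)^2 \<le> 1" using x by (simp add: power_le_one)
    then have "s * (norm x)^2 \<le> max 0 s"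
      by (cases "s \<ge> 0") (auto simp: mult_left_le mult_nonpos_nonneg)
    then have "(norm (F 0 *v x))^2 \<le> max 0 s" using F0sq[of x] by linarith
    then show "norm (F 0 *v x) \<le> sqrt (max 0 s)" by (rule real_le_rsqrt)
  qed
  have q_lt: "q < 1"
  proof -
    have "sqrt (max 0 s) < 1" using s_lt by simp
    then show ?thesis using q_le by linarith
  qed
  have Fsuc: "F (Suc k) = qmpow (F k) p" for k
  proof -
    have XA: "X k ** A = mat 1 - F k" by (simp add: F_def)
    have "X (Suc k) ** A = (\<Sum>i<p. qmpow (F k) i) ** (X k ** A)"
      using XSuc by (simp add: F_def matrix_mul_assoc)
    also have "\<dots> = mat 1 - qmpow (F k) p" by (simp only: XA geom_mat)
    finally show ?thesis by (simp add: F_def)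
  qed
  have P1: "qopnorm (F k) \<le> q ^ (p ^ k)" for k
  proof (induction k)
    case 0 then show ?case by (simp add: q_def)
  next
    case (Suc k)
    have "qopnorm (F (Suc k)) \<le> qopnorm (F k) ^ p" unfolding Fsuc by (rule opnorm_qmpow)
    also have "\<dots> \<le> (q ^ (p ^ k)) ^ p" by (rule power_mono[OF Suc opnorm_nonneg])
    also have "\<dots> = q ^ (p ^ Suc k)" by (simp add: power_mult[symmetric] mult.commute)
    finally show ?case .
  qed
  have P2: "(\<lambda>k. q ^ (p ^ k)) \<longlonglongrightarrow> 0"
  proof (rule Lim_null_comparison)
    show "(\<lambda>k. q ^ k) \<longlonglongrightarrow> 0" by (rule LIMSEQ_power_zero) (use q_nonneg q_lt in simp)
    show "\<forall>\<^sub>F k in sequentially. norm (q ^ (p ^ k)) \<le> q ^ k"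
    proof (rule always_eventually, rule allI)
      fix k
      have "k \<le> 2 ^ k" by (simp add: less_imp_le)
      also have "(2::nat) ^ k \<le> p ^ k" using p by (simp add: power_mono)
      finally have "k \<le> p ^ k" .
      then show "norm (q ^ (p ^ k)) \<le> q ^ k"
        using q_nonneg q_lt by (simp add: power_decreasing)
    qed
  qed
  have P3b: "qopnorm (X k ** A - mat 1) \<le> q ^ (p ^ k)" for k
    using opnorm_swap[of "X k ** A" "mat 1"] P1[of k] by (simp add: F_def)
  have P3: "(\<lambda>k. qopnorm (X k ** A - mat 1)) \<longlonglongrightarrow> 0"
    by (rule Lim_null_comparison[OF always_eventually P2]) (simp add: opnorm_nonneg P3b)
  have Z: "X k ** (mat 1 - A ** G) = 0" for k
  proof (induction k)
    case 0
    have "qadj A ** (A ** G) = qadj A"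
      by (simp add: G_def matrix_mul_assoc BC)
    then have "qadj A ** (mat 1 - A ** G) = 0" by (simp add: mm_diff_l)
    then show ?case by (simp add: X0' scalar_matrix_assoc[symmetric])
  next
    case (Suc k)
    then show ?case using XSuc by (simp add: matrix_mul_assoc[symmetric])
  qed
  have XG: "X k - G = (X k ** A - mat 1) ** G" for k
  proof -
    have "X k - X k ** (A ** G) = 0" using Z[of k] by (simp add: mm_diff_l)
    then have "X k = X k ** A ** G" by (simp add: matrix_mul_assoc)
    then show ?thesis by (simp add: mm_diff_r)
  qed
  have P5b: "qopnorm (X k - G) \<le> q ^ (p ^ k) * g" for k
  proof -
    have "qopnorm (X k - G) \<le> qopnorm (X k ** A - mat 1) * g"
      unfolding XG g_def by (rule opnorm_mult)
    also have "\<dots> \<le> q ^ (p ^ k) * g" using P3b[of k] g_pos by (simp add: mult_right_mono)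
    finally show ?thesis .
  qed
  have P2g: "(\<lambda>k. q ^ (p ^ k) * g) \<longlonglongrightarrow> 0"
    using tendsto_mult[OF P2 tendsto_const[of g]] by simp
  have P5: "(\<lambda>k. qopnorm (X k - G)) \<longlonglongrightarrow> 0"
    by (rule Lim_null_comparison[OF always_eventually P2g]) (simp add: opnorm_nonneg P5b)
  have P4b: "qopnorm (A ** X k - A ** G) \<le> a * (q ^ (p ^ k) * g)" for k
  proof -
    have "qopnorm (A ** X k - A ** G) \<le> a * qopnorm (X k - G)"
      unfolding mm_diff_l[symmetric] a_def by (rule opnorm_mult)
    also have "\<dots> \<le> a * (q ^ (p ^ k) * g)" using P5b[of k] a_nonneg by (simp add: mult_left_mono)
    finally show ?thesis .
  qed
  have P2ag: "(\<lambda>k. a * (q ^ (p ^ k) * g)) \<longlonglongrightarrow> 0"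
    using tendsto_mult[OF tendsto_const[of a] P2g] by simp
  have P4: "(\<lambda>k. qopnorm (A ** X k - A ** G)) \<longlonglongrightarrow> 0"
    by (rule Lim_null_comparison[OF always_eventually P2ag]) (simp add: opnorm_nonneg P4b)
  show ?thesis
    using P1 P2 P3 P4 P5 by (simp add: F_def q_def PG G_def[symmetric])
qed

end
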